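(* Let $n\geq0$ be an integer and $i\in\{1,2,3\}$. Then $\dim_{\mathbb C}\mathscr M_n(x_i)=0$ if $n<t_i$, and $\dim_{\mathbb C}\mathscr M_n(x_i)=2(n-t_i+1)$ if $n\geq t_i$.
   Context: Fix real numbers $k_1,k_2,k_3$. For $i=1,2,3$ let $R_i$ be the operator on functions on $\mathbb R^3$ replacing $x_i$ by $-x_i$, and $T_if=\frac{\partial f}{\partial x_i}+k_i\frac{f-R_if}{x_i}$ (Dunkl operators). Let $\sigma_1=\begin{pmatrix}0&1\\1&0\end{pmatrix}$, $\sigma_2=\begin{pmatrix}0&-\sqrt{-1}\\ \sqrt{-1}&0\end{pmatrix}$, $\sigma_3=\begin{pmatrix}1&0\\0&-1\end{pmatrix}$, and let $e_i$ act on $\mathbb C^2$ by $\sigma_i$. Tensor products are over $\mathbb R$; $\mathbb R[\cdots]_m$ denotes homogeneous polynomials of degree $m$. Let $\mathbf D=e_1\otimes T_1+e_2\otimes T_2+e_3\otimes T_3$ and $\mathscr M_n=\ker(\mathbf D|_{\mathbb C^2\otimes\mathbb R[x_1,x_2,x_3]_n})$. For $i=1,2,3$ set $t_i=-2k_i$ if $2k_i$ is an odd negative integer, and $t_i=\infty$ otherwise. For $i=1,2,3$, $\mathscr M_n(x_i)=\mathscr M_n\cap\bigoplus_{j=t_i}^n\mathbb C^2\otimes(x_i^j\cdot\mathbb R[x_p,x_q]_{n-j})$ where $\{p,q\}=\{1,2,3\}\setminus\{i\}$, interpreted as $\{0\}$ if $n<t_i$. *)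

theory Defs
  imports Complex_Main "HOL-Library.Function_Algebras" "HOL-Library.Extended_Nat"
begin

(* Monomials x1^a x2^b x3^c are encoded by their exponent triple (a,b,c). *)
type_synonym mono = "nat \<times> nat \<times> nat"

(* An element of C^2 \<otimes>_R R[x1,x2,x3] is encoded by its coefficient function:
   F j m = the j-th C^2-coordinate (j = 0,1) of the coefficient of the monomial m. *)
type_synonym spinpoly = "nat \<Rightarrow> mono \<Rightarrow> complex"

definition deg :: "mono \<Rightarrow> nat" where
  "deg m = (case m of (a, b, c) \<Rightarrow> a + b + c)"

definition expo :: "nat \<Rightarrow> mono \<Rightarrow> nat" where
  "expo i m = (case m of (a, b, c) \<Rightarrow> if i = 1 then a else if i = 2 then b else c)"

definition incr :: "nat \<Rightarrow> mono \<Rightarrow> mono" where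
  "incr i m = (case m of (a, b, c) \<Rightarrow>
     if i = 1 then (Suc a, b, c) else if i = 2 then (a, Suc b, c) else (a, b, Suc c))"

(* T_i (x_i^a * rest) = (a + k_i (1 - (-1)^a)) x_i^(a-1) * rest *)
definition dunkl_factor :: "real \<Rightarrow> nat \<Rightarrow> complex" where
  "dunkl_factor k a = of_nat a + complex_of_real k * (1 - (-1) ^ a)"

definition dunkl :: "(nat \<Rightarrow> real) \<Rightarrow> nat \<Rightarrow> (mono \<Rightarrow> complex) \<Rightarrow> (mono \<Rightarrow> complex)" where
  "dunkl k i p m = dunkl_factor (k i) (Suc (expo i m)) * p (incr i m)"

(* D = e1 \<otimes> T1 + e2 \<otimes> T2 + e3 \<otimes> T3 with e_i acting by the Pauli matrices \<sigma>_i: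
   \<sigma>1 (u,v) = (v,u), \<sigma>2 (u,v) = (-i v, i u), \<sigma>3 (u,v) = (u,-v) *)
definition Dirac :: "(nat \<Rightarrow> real) \<Rightarrow> spinpoly \<Rightarrow> spinpoly" where
  "Dirac k F j =
     (if j = 0 then (\<lambda>m. dunkl k 1 (F 1) m - \<i> * dunkl k 2 (F 1) m + dunkl k 3 (F 0) m)
      else if j = 1 then (\<lambda>m. dunkl k 1 (F 0) m + \<i> * dunkl k 2 (F 0) m - dunkl k 3 (F 1) m)
      else (\<lambda>m. 0))"

definition spin_hom :: "nat \<Rightarrow> spinpoly set" where
  "spin_hom n = {F. \<forall>j m. F j m \<noteq> 0 \<longrightarrow> j < 2 \<and> deg m = n}"

definition monogenic :: "(nat \<Rightarrow> real) \<Rightarrow> nat \<Rightarrow> spinpoly set" where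
  "monogenic k n = {F \<in> spin_hom n. Dirac k F = (\<lambda>j m. 0)}"

definition t_param :: "real \<Rightarrow> enat" where
  "t_param k = (if \<exists>m::nat. odd m \<and> 2 * k = - real m then enat (nat (- \<lfloor>2 * k\<rfloor>)) else \<infinity>)"

definition monogenic_x :: "(nat \<Rightarrow> real) \<Rightarrow> nat \<Rightarrow> nat \<Rightarrow> spinpoly set" where
  "monogenic_x k i n = {F \<in> monogenic k n. \<forall>j m. F j m \<noteq> 0 \<longrightarrow> t_param (k i) \<le> enat (expo i m)}"

definition cscale :: "complex \<Rightarrow> spinpoly \<Rightarrow> spinpoly" where
  "cscale c F = (\<lambda>j m. c * F j m)"

definition cdim :: "spinpoly set \<Rightarrow> nat" where
  "cdim S = vector_space.dim cscale S"

end

theory Submission imports Defs begin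

definition decr :: "nat \<Rightarrow> mono \<Rightarrow> mono" where
 "decr i m = (case m of (a,b,c) \<Rightarrow> if i=1 then (a-1,b,c) else if i=2 then (a,b-1,c) else (a,b,c-1))"

definition cf :: "(nat \<Rightarrow> real) \<Rightarrow> nat \<Rightarrow> mono \<Rightarrow> complex" where
 "cf k l m = dunkl_factor (k l) (Suc (expo l m))"

definition solve :: "(nat\<Rightarrow>real) \<Rightarrow> nat \<Rightarrow> spinpoly \<Rightarrow> nat \<Rightarrow> mono \<Rightarrow> complex" where
 "solve k i F j m = (
   if i = 3 then (if j = 0 then -(cf k 1 m*F 1 (incr 1 m) - \<i>*cf k 2 m*F 1 (incr 2 m))/cf k 3 m
                  else if j=1 then (cf k 1 m*F 0 (incr 1 m) + \<i>*cf k 2 m*F 0 (incr 2 m))/cf k 3 m else 0)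
   else if i = 1 then (if j = 0 then (-\<i>*cf k 2 m*F 0 (incr 2 m) + cf k 3 m*F 1 (incr 3 m))/cf k 1 m
                  else if j = 1 then (\<i>*cf k 2 m*F 1 (incr 2 m) - cf k 3 m*F 0 (incr 3 m))/cf k 1 m else 0)
   else (if j = 0 then \<i>*(cf k 1 m*F 0 (incr 1 m) - cf k 3 m*F 1 (incr 3 m))/cf k 2 m
                  else if j=1 then -\<i>*(cf k 1 m*F 1 (incr 1 m) + cf k 3 m*F 0 (incr 3 m))/cf k 2 m else 0))"

lemma Dirac_eval: "Dirac k F j m =
   (if j = 0 then cf k 1 m * F 1 (incr 1 m) - \<i> * (cf k 2 m * F 1 (incr 2 m)) + cf k 3 m * F 0 (incr 3 m)
    else if j = 1 then cf k 1 m * F 0 (incr 1 m) + \<i> * (cf k 2 m * F 0 (incr 2 m)) - cf k 3 m * F 1 (incr 3 m)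
    else 0)"
  by (simp add: Dirac_def dunkl_def cf_def)

lemma ii_solve1: "(c::complex) \<noteq> 0 \<Longrightarrow> (A - \<i>*(c*x) + B = 0) \<longleftrightarrow> x = -\<i>*(A+B)/c"
proof -
  assume c: "c \<noteq> 0"
  have "(A - \<i>*(c*x) + B = 0) \<longleftrightarrow> \<i>*(A - \<i>*(c*x) + B) = 0" by simp
  also have "\<i>*(A - \<i>*(c*x) + B) = c * x - (-\<i>*(A+B))" by (simp add: algebra_simps)
  also have "(c * x - (-\<i>*(A+B)) = 0) \<longleftrightarrow> c * x = -\<i>*(A+B)" by (rule right_minus_eq)
  also have "\<dots> \<longleftrightarrow> x = -\<i>*(A+B)/c" using c by (auto simp: field_simps)
  finally show ?thesis .
qed

lemma ii_solve2: "(c::complex) \<noteq> 0 \<Longrightarrow> (A + \<i>*(c*x) - B = 0) \<longleftrightarrow> x = \<i>*(A-B)/c"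
proof -
  assume c: "c \<noteq> 0"
  have "(A + \<i>*(c*x) - B = 0) \<longleftrightarrow> \<i>*(A + \<i>*(c*x) - B) = 0" by simp
  also have "\<i>*(A + \<i>*(c*x) - B) = -(c * x - \<i>*(A-B))" by (simp add: algebra_simps)
  also have "(-(c * x - \<i>*(A-B)) = 0) \<longleftrightarrow> c * x = \<i>*(A-B)" by (simp only: neg_equal_0_iff_equal right_minus_eq)
  also have "\<dots> \<longleftrightarrow> x = \<i>*(A-B)/c" using c by (auto simp: field_simps)
  finally show ?thesis .
qed

lemma eqn_solve:
  assumes "i \<in> {1,2,3}" "cf k i m \<noteq> 0"
  shows "(Dirac k F 0 m = 0 \<and> Dirac k F 1 m = 0) \<longleftrightarrow>
         (F 0 (incr i m) = solve k i F 0 m \<and> F 1 (incr i m) = solve k i F 1 m)"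
proof -
  consider "i = 1" | "i = 2" | "i = 3" using assms(1) by auto
  then show ?thesis
  proof cases
    case 2
    have e1: "Dirac k F 0 m = 0 \<longleftrightarrow> F 1 (incr i m) = solve k i F 1 m"
      unfolding Dirac_eval solve_def using 2 assms(2)
      ii_solve1[of "cf k 2 m" "cf k 1 m * F 1 (incr 1 m)" "F 1 (incr 2 m)" "cf k 3 m * F 0 (incr 3 m)"]
      by simp
    have e2: "Dirac k F 1 m = 0 \<longleftrightarrow> F 0 (incr i m) = solve k i F 0 m"
      unfolding Dirac_eval solve_def using 2 assms(2)
      ii_solve2[of "cf k 2 m" "cf k 1 m * F 0 (incr 1 m)" "F 0 (incr 2 m)" "cf k 3 m * F 1 (incr 3 m)"]
      by simp
    show ?thesis using e1 e2 by blast
  qed (use assms in \<open>auto simp: Dirac_eval solve_def field_simps\<close>)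
qed

lemma expo_incr_same: "i \<in> {1,2,3} \<Longrightarrow> expo i (incr i m) = Suc (expo i m)"
  by (cases m) (auto simp: expo_def incr_def)
lemma expo_incr_other: "i \<in> {1,2,3} \<Longrightarrow> l \<in> {1,2,3} \<Longrightarrow> l \<noteq> i \<Longrightarrow> expo i (incr l m) = expo i m"
  by (cases m) (auto simp: expo_def incr_def)
lemma decr_incr: "i \<in> {1,2,3} \<Longrightarrow> decr i (incr i m) = m"
  by (cases m) (auto simp: decr_def incr_def)
lemma incr_decr: "i \<in> {1,2,3} \<Longrightarrow> expo i m > 0 \<Longrightarrow> incr i (decr i m) = m"
  by (cases m) (auto simp: decr_def incr_def expo_def)
lemma expo_decr: "i \<in> {1,2,3} \<Longrightarrow> expo i (decr i m) = expo i m - 1"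
  by (cases m) (auto simp: decr_def expo_def)
lemma deg_incr: "deg (incr l m) = Suc (deg m)"
  by (cases m) (auto simp: deg_def incr_def)
lemma expo_le_deg: "i \<in> {1,2,3} \<Longrightarrow> expo i m \<le> deg m"
  by (cases m) (auto simp: deg_def expo_def)
lemma deg_decr: "i \<in> {1,2,3} \<Longrightarrow> expo i m > 0 \<Longrightarrow> Suc (deg (decr i m)) = deg m"
  by (cases m) (auto simp: deg_def expo_def decr_def)

lemma solve_zero: "(\<And>j l. F j (incr l m) = 0) \<Longrightarrow> solve k i F j m = 0"
  by (simp add: solve_def)
lemma solve_j: "j \<ge> 2 \<Longrightarrow> solve k i F j m = 0"
  by (simp add: solve_def)
lemma solve_cong:
  assumes "i \<in> {1,2,3}" "\<And>j l. l \<in> {1,2,3} \<Longrightarrow> l \<noteq> i \<Longrightarrow> F j (incr l m) = G j (incr l m)"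
  shows "solve k i F j m = solve k i G j m"
proof -
  consider "i = 1" | "i = 2" | "i = 3" using assms(1) by auto
  then show ?thesis
    by cases (simp_all add: solve_def assms(2))
qed

lemma df_zero: "odd t \<Longrightarrow> dunkl_factor (- real t / 2) t = 0"
  by (simp add: dunkl_factor_def)
lemma df_nz: assumes "odd t" "t < a" shows "dunkl_factor (- real t / 2) a \<noteq> 0"
proof (cases "even a")
  case True
  then show ?thesis using assms by (simp add: dunkl_factor_def)
next
  case False
  then have "dunkl_factor (- real t / 2) a = of_nat a - of_nat t"
    by (simp add: dunkl_factor_def)
  then show ?thesis using assms by simp
qed

primrec ext :: "(nat\<Rightarrow>real) \<Rightarrow> nat \<Rightarrow> nat \<Rightarrow> spinpoly \<Rightarrow> nat \<Rightarrow> spinpoly" where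
  "ext k i t g 0 = (\<lambda>j m. if expo i m = t then g j m else 0)"
| "ext k i t g (Suc l) = (\<lambda>j m. if expo i m = t + Suc l then solve k i (ext k i t g l) j (decr i m) else 0)"

definition extend :: "(nat\<Rightarrow>real) \<Rightarrow> nat \<Rightarrow> nat \<Rightarrow> spinpoly \<Rightarrow> spinpoly" where
  "extend k i t g = (\<lambda>j m. if t \<le> expo i m then ext k i t g (expo i m - t) j m else 0)"

lemma ext_supp:
  assumes i: "i \<in> {1,2,3}" and g: "\<And>j m. g j m \<noteq> 0 \<Longrightarrow> j < 2 \<and> deg m = n"
  shows "ext k i t g l j m \<noteq> 0 \<Longrightarrow> j < 2 \<and> deg m = n \<and> expo i m = t + l"
proof (induction l arbitrary: j m)
  case 0
  then have "expo i m = t" "g j m \<noteq> 0" by (simp_all split: if_splits)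
  then show ?case using g by simp
next
  case (Suc l)
  have e: "expo i m = t + Suc l"
    using Suc.prems by (simp split: if_splits)
  have s: "solve k i (ext k i t g l) j (decr i m) \<noteq> 0"
    using Suc.prems e by simp
  have "j < 2" using s solve_j[of j] by (cases "j < 2") auto
  moreover have "\<exists>j' l'. ext k i t g l j' (incr l' (decr i m)) \<noteq> 0"
  proof (rule ccontr)
    assume "\<not> ?thesis"
    then have "solve k i (ext k i t g l) j (decr i m) = 0" by (intro solve_zero) blast
    then show False using s by simp
  qed
  then obtain j' l' where "ext k i t g l j' (incr l' (decr i m)) \<noteq> 0" by blast
  then have "deg (incr l' (decr i m)) = n" using Suc.IH by blast
  then have "deg m = n" using deg_incr deg_decr[OF i, of m] e by simp
  ultimately show ?case using e by simp
qed

lemma extend_layer: "expo i m = t \<Longrightarrow> extend k i t g j m = g j m"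
  by (simp add: extend_def)

lemma extend_supp:
  assumes i: "i \<in> {1,2,3}" and g: "\<And>j m. g j m \<noteq> 0 \<Longrightarrow> j < 2 \<and> deg m = n"
  shows "extend k i t g j m \<noteq> 0 \<Longrightarrow> j < 2 \<and> deg m = n \<and> t \<le> expo i m"
proof -
  assume h: "extend k i t g j m \<noteq> 0"
  then have t: "t \<le> expo i m" by (simp add: extend_def split: if_splits)
  with h have "ext k i t g (expo i m - t) j m \<noteq> 0" by (simp add: extend_def)
  then have "j < 2 \<and> deg m = n" using ext_supp[OF i g] by blast
  then show ?thesis using t by simp
qed

lemma cf_zero: "i \<in> {1,2,3} \<Longrightarrow> odd t \<Longrightarrow> k i = - real t / 2 \<Longrightarrow> Suc (expo i m) = t \<Longrightarrow> cf k i m = 0"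
proof -
  assume a: "odd t" "k i = - real t / 2" "Suc (expo i m) = t"
  then have "cf k i m = dunkl_factor (- real t / 2) t" by (simp add: cf_def)
  then show ?thesis using df_zero[OF a(1)] by simp
qed
lemma cf_nz: "i \<in> {1,2,3} \<Longrightarrow> odd t \<Longrightarrow> k i = - real t / 2 \<Longrightarrow> t \<le> expo i m \<Longrightarrow> cf k i m \<noteq> 0"
proof -
  assume a: "odd t" "k i = - real t / 2" "t \<le> expo i m"
  then have "cf k i m = dunkl_factor (- real t / 2) (Suc (expo i m))" by (simp add: cf_def)
  then show ?thesis using df_nz[OF a(1), of "Suc (expo i m)"] a(3) by simp
qed

lemma Dirac_low:
  assumes i: "i \<in> {1,2,3}" and t: "odd t" "k i = - real t / 2"
    and F: "\<And>j m. F j m \<noteq> 0 \<Longrightarrow> t \<le> expo i m" and lo: "expo i m < t"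
  shows "Dirac k F j m = 0"
proof -
  have "cf k l m * F j' (incr l m) = 0" if l: "l \<in> {1,2,3}" for l j'
  proof (cases "l = i")
    case True
    show ?thesis
    proof (cases "Suc (expo i m) = t")
      case True
      then show ?thesis using cf_zero[of i t k, OF i t] \<open>l = i\<close> by simp
    next
      case False
      then have "expo i (incr l m) < t" using lo expo_incr_same[OF i] \<open>l = i\<close> by simp
      then have "F j' (incr l m) = 0" by (metis F not_le)
      then show ?thesis by simp
    qed
  next
    case False
    then have "expo i (incr l m) < t" using lo expo_incr_other[OF i l] by simp
    then have "F j' (incr l m) = 0" by (metis F not_le)
    then show ?thesis by simp
  qed
  then have z1: "\<And>j'. cf k 1 m * F j' (incr 1 m) = 0" and z2: "\<And>j'. cf k 2 m * F j' (incr 2 m) = 0"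
     and z3: "\<And>j'. cf k 3 m * F j' (incr 3 m) = 0" by auto
  show ?thesis unfolding Dirac_eval by (simp only: z1 z2 z3) simp
qed

lemma extend_Dirac:
  assumes i: "i \<in> {1,2,3}" and t: "odd t" "k i = - real t / 2"
  shows "Dirac k (extend k i t g) j m = 0"
proof -
  let ?F = "extend k i t g"
  have Fs: "\<And>j m. ?F j m \<noteq> 0 \<Longrightarrow> t \<le> expo i m" by (auto simp: extend_def split: if_splits)
  show ?thesis
  proof (cases "expo i m < t")
    case True
    then show ?thesis using Dirac_low[of i t k "extend k i t g" m j] i t Fs by blast
  next
    case False
    define l where "l = expo i m - t"
    have le: "expo i m = t + l" using False l_def by simp
    have cf: "cf k i m \<noteq> 0" using cf_nz[of i t k, OF i t] False by simp
    have oth: "?F j' (incr l' m) = ext k i t g l j' (incr l' m)" if "l' \<in> {1,2,3}" "l' \<noteq> i" for j' l'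
      using expo_incr_other[OF i that] le by (simp add: extend_def)
    have "?F j' (incr i m) = solve k i ?F j' m" for j'
    proof -
      have "?F j' (incr i m) = solve k i (ext k i t g l) j' m"
        using expo_incr_same[OF i] le decr_incr[OF i] by (simp add: extend_def)
      also have "\<dots> = solve k i ?F j' m"
        by (rule solve_cong[OF i]) (simp add: oth)
      finally show ?thesis .
    qed
    then have "Dirac k ?F 0 m = 0 \<and> Dirac k ?F 1 m = 0"
      using eqn_solve[OF i cf] by blast
    then show ?thesis
    proof -
      assume h: "Dirac k ?F 0 m = 0 \<and> Dirac k ?F 1 m = 0"
      show ?thesis
      proof (cases "j = 0 \<or> j = 1")
        case True then show ?thesis using h by auto
      next
        case False then show ?thesis by (simp only: Dirac_eval) simp
      qed
    qed
  qed
qed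

lemma unique0:
  assumes i: "i \<in> {1,2,3}" and t: "odd t" "k i = - real t / 2"
    and D: "\<And>j m. Dirac k F j m = 0"
    and F: "\<And>j m. F j m \<noteq> 0 \<Longrightarrow> j < 2 \<and> t \<le> expo i m"
    and L: "\<And>j m. expo i m = t \<Longrightarrow> F j m = 0"
  shows "F j m = 0"
proof -
  have "\<forall>j m. expo i m = t + l \<longrightarrow> F j m = 0" for l
  proof (induction l)
    case 0
    then show ?case using L by simp
  next
    case (Suc l)
    show ?case
    proof (intro allI impI)
      fix j m assume e: "expo i m = t + Suc l"
      define m' where "m' = decr i m"
      have mm: "m = incr i m'" using incr_decr[OF i] e m'_def by simp
      have e': "expo i m' = t + l" using expo_decr[OF i] e m'_def by simp
      have cf: "cf k i m' \<noteq> 0" using cf_nz[of i t k, OF i t] e' by simp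
      have sol: "F j' (incr i m') = solve k i F j' m'" if "j' < 2" for j'
        using eqn_solve[OF i cf, of F] D that by (cases j') auto
      have z: "solve k i F j' m' = 0" for j'
      proof -
        have "solve k i F j' m' = solve k i (\<lambda>_ _. 0) j' m'"
        proof (rule solve_cong[OF i])
          fix j'' l' assume "l' \<in> {1,2,3}" "l' \<noteq> i"
          then have "expo i (incr l' m') = t + l" using expo_incr_other[OF i] e' by simp
          then show "F j'' (incr l' m') = 0" using Suc.IH by blast
        qed
        also have "\<dots> = 0" by (simp add: solve_zero)
        finally show ?thesis .
      qed
      show "F j m = 0"
      proof (cases "j < 2")
        case True then show ?thesis using sol z mm by simp
      next
        case False then show ?thesis using F by blast
      qed
    qed
  qed
  note A = this
  show ?thesis
  proof (cases "expo i m < t")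
    case True then show ?thesis by (meson F not_le)
  next
    case False
    then have "expo i m = t + (expo i m - t)" by simp
    then show ?thesis by (rule A[of "expo i m - t", rule_format])
  qed
qed


interpretation cs: vector_space cscale
  by unfold_locales (auto simp: cscale_def fun_eq_iff algebra_simps)

lemma sum_fun_app: "(\<Sum>a\<in>A. (f a :: spinpoly)) j m = (\<Sum>a\<in>A. f a j m)"
  by (induction A rule: infinite_finite_induct) auto

lemma t_param_enat: "t_param r = enat t \<Longrightarrow> odd t \<and> r = - real t / 2"
proof -
  assume h: "t_param r = enat t"
  then have ex: "\<exists>m::nat. odd m \<and> 2 * r = - real m"
    by (auto simp: t_param_def split: if_splits)
  then obtain m :: nat where m: "odd m" "2 * r = - real m" by blast
  have "\<lfloor>2 * r\<rfloor> = - int m" using m(2) by (metis floor_of_int of_int_minus of_int_of_nat_eq)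
  then have "t = m" using h ex by (simp add: t_param_def)
  then show ?thesis using m by simp
qed

lemma t_param_cases: "t_param r = \<infinity> \<or> (\<exists>t. t_param r = enat t)"
  by (cases "t_param r") auto

lemma Dirac_diff: "Dirac k (\<lambda>j m. F j m - G j m) j m = Dirac k F j m - Dirac k G j m"
  by (simp add: Dirac_eval algebra_simps)

lemma Dirac_scale: "Dirac k (\<lambda>j m. c * F j m) j m = c * Dirac k F j m"
  by (simp add: Dirac_eval algebra_simps)

lemma Dirac_sum: "Dirac k (\<lambda>j m. \<Sum>p\<in>P. H p j m) j m = (\<Sum>p\<in>P. Dirac k (H p) j m)"
  by (simp add: Dirac_eval algebra_simps sum.distrib sum_distrib_left sum_subtractf)

lemma zero_dim:
  assumes "\<And>F. F \<in> V \<Longrightarrow> F = (\<lambda>j m. 0)"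
  shows "cdim V = 0"
  unfolding cdim_def
proof (rule cs.dim_unique[of "{}"])
  show "V \<subseteq> cs.span {}" using assms by (auto simp: zero_fun_def)
qed (use cs.independent_empty in auto)

definition lay :: "nat \<Rightarrow> nat \<Rightarrow> nat \<Rightarrow> nat \<Rightarrow> mono" where
  "lay i t n a = (if i = 1 then (t, a, n - t - a) else if i = 2 then (a, t, n - t - a) else (a, n - t - a, t))"

lemma layer_card:
  assumes i: "i \<in> {1,2,3}" and tn: "t \<le> n"
  shows "card {m. deg m = n \<and> expo i m = t} = n - t + 1"
proof -
  have eq: "{m. deg m = n \<and> expo i m = t} = lay i t n ` {0..n-t}"
  proof (intro equalityI subsetI)
    fix m assume "m \<in> {m. deg m = n \<and> expo i m = t}"
    then show "m \<in> lay i t n ` {0..n-t}"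
      using i by (cases m) (auto simp: deg_def expo_def lay_def image_iff)
  next
    fix m assume "m \<in> lay i t n ` {0..n-t}"
    then show "m \<in> {m. deg m = n \<and> expo i m = t}"
      using i tn by (auto simp: deg_def expo_def lay_def)
  qed
  have "inj_on (lay i t n) {0..n-t}"
    using i by (auto simp: inj_on_def lay_def)
  then show ?thesis unfolding eq by (simp add: card_image)
qed

theorem main_case:
  assumes i: "i \<in> {1,2,3}" and t: "odd t" "k i = - real t / 2" and tn: "t \<le> n"
  shows "cdim (monogenic_x k i n) = 2 * (n - t + 1)"
proof -
  let ?V = "monogenic_x k i n"
  have tp: "t_param (k i) = enat t"
  proof -
    have ex: "\<exists>m::nat. odd m \<and> 2 * k i = - real m" using t by auto
    have "2 * k i = of_int (- int t)" using t(2) by simp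
    then have "\<lfloor>2 * k i\<rfloor> = - int t" by (metis floor_of_int)
    then show ?thesis using ex by (simp add: t_param_def)
  qed
  define P where "P = {(j, m). j < (2::nat) \<and> deg m = n \<and> expo i m = t}"
  define b where "b p = extend k i t (\<lambda>j m. if (j, m) = p then 1 else 0)" for p :: "nat \<times> mono"
  have finP: "finite P"
  proof (rule finite_subset)
    show "P \<subseteq> {..<2} \<times> ({..n} \<times> {..n} \<times> {..n})"
      by (auto simp: P_def deg_def)
  qed auto
  have cardP: "card P = 2 * (n - t + 1)"
  proof -
    have "P = {0::nat, 1} \<times> {m. deg m = n \<and> expo i m = t}" by (auto simp: P_def)
    then show ?thesis using layer_card[OF i tn] by (simp add: card_cartesian_product)
  qed
  have gsupp: "(\<lambda>j m. if (j, m) = p then 1 else 0) j m \<noteq> (0::complex) \<Longrightarrow> j < 2 \<and> deg m = n"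
    if "p \<in> P" for p j m using that by (auto simp: P_def split: if_splits)
  have bsupp: "b p j m \<noteq> 0 \<Longrightarrow> j < 2 \<and> deg m = n \<and> t \<le> expo i m" if "p \<in> P" for p j m
    unfolding b_def by (rule extend_supp[OF i gsupp[OF that]])
  have bD: "Dirac k (b p) j m = 0" for p j m
    unfolding b_def by (rule extend_Dirac[where k=k, OF i t])
  have bL: "b p j m = (if (j, m) = p then 1 else 0)" if "(j, m) \<in> P" for p j m
    using that unfolding b_def by (simp add: extend_layer P_def)
  have bV: "b p \<in> ?V" if "p \<in> P" for p
    unfolding monogenic_x_def monogenic_def spin_hom_def
    using bsupp[OF that] tp by (auto simp: fun_eq_iff bD)
  have injb: "inj_on b P"
  proof (rule inj_onI)
    fix p q assume pq: "p \<in> P" "q \<in> P" "b p = b q"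
    obtain j m where p: "p = (j, m)" by (cases p)
    have "b p j m = 1" using bL pq(1) p by simp
    then have "b q j m = 1" using pq(3) by simp
    then show "p = q" using bL[of j m q] pq(1) p by (simp split: if_splits)
  qed
  have indep: "cs.independent (b ` P)"
  proof
    assume "cs.dependent (b ` P)"
    then obtain u where u: "\<exists>v\<in>b ` P. u v \<noteq> 0" "(\<Sum>v\<in>b ` P. cscale (u v) v) = 0"
      using cs.dependent_finite[of "b ` P"] finP by auto
    obtain q where q: "q \<in> P" "u (b q) \<noteq> 0" using u(1) by auto
    obtain j0 m0 where q0: "q = (j0, m0)" by (cases q)
    have "(\<Sum>p\<in>P. cscale (u (b p)) (b p)) = 0"
      using u(2) by (simp add: sum.reindex[OF injb])
    then have "(\<Sum>p\<in>P. cscale (u (b p)) (b p)) j0 m0 = 0" by simp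
    then have "(\<Sum>p\<in>P. u (b p) * b p j0 m0) = 0" by (simp add: sum_fun_app cscale_def)
    moreover have "(\<Sum>p\<in>P. u (b p) * b p j0 m0) = (\<Sum>p\<in>P. if p = q then u (b p) else 0)"
      by (rule sum.cong) (use bL q q0 in auto)
    moreover have "\<dots> = u (b q)" using finP q(1) by simp
    ultimately show False using q(2) by simp
  qed
  have spanning: "?V \<subseteq> cs.span (b ` P)"
  proof
    fix F assume FV: "F \<in> ?V"
    have h1: "\<forall>j m. F j m \<noteq> 0 \<longrightarrow> j < 2 \<and> deg m = n"
      and h2: "\<forall>j m. F j m \<noteq> 0 \<longrightarrow> t_param (k i) \<le> enat (expo i m)"
      using FV unfolding monogenic_x_def monogenic_def spin_hom_def by blast+
    have Fs: "F j m \<noteq> 0 \<Longrightarrow> j < 2 \<and> deg m = n \<and> t \<le> expo i m" for j m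
    proof -
      assume a: "F j m \<noteq> 0"
      have "j < 2" "deg m = n" "t_param (k i) \<le> enat (expo i m)" using h1 h2 a by blast+
      then show ?thesis using tp by simp
    qed
    have FD: "Dirac k F j m = 0" for j m
      using FV unfolding monogenic_x_def monogenic_def by auto
    define S where "S = (\<Sum>p\<in>P. cscale (F (fst p) (snd p)) (b p))"
    have Sin: "S \<in> cs.span (b ` P)"
      unfolding S_def
      by (intro cs.span_sum cs.span_scale cs.span_base) auto
    have Sev: "S j m = (\<Sum>p\<in>P. F (fst p) (snd p) * b p j m)" for j m
      unfolding S_def by (simp add: sum_fun_app cscale_def)
    define G where "G j m = F j m - (\<Sum>p\<in>P. F (fst p) (snd p) * b p j m)" for j m
    have GD: "Dirac k G j m = 0" for j m
    proof -
      have "Dirac k G j m = Dirac k F j m - Dirac k (\<lambda>j m. \<Sum>p\<in>P. F (fst p) (snd p) * b p j m) j m"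
        unfolding G_def by (rule Dirac_diff)
      also have "Dirac k (\<lambda>j m. \<Sum>p\<in>P. F (fst p) (snd p) * b p j m) j m
          = (\<Sum>p\<in>P. Dirac k (\<lambda>j m. F (fst p) (snd p) * b p j m) j m)"
        by (rule Dirac_sum)
      also have "\<dots> = (\<Sum>p\<in>P. F (fst p) (snd p) * Dirac k (b p) j m)"
        by (simp add: Dirac_scale)
      finally show ?thesis by (simp add: FD bD)
    qed
    have Gs: "G j m \<noteq> 0 \<Longrightarrow> j < 2 \<and> t \<le> expo i m" for j m
    proof (rule ccontr)
      assume h: "G j m \<noteq> 0" "\<not> (j < 2 \<and> t \<le> expo i m)"
      then have "F j m = 0" using Fs by blast
      moreover have "b p j m = 0" if "p \<in> P" for p using bsupp[OF that, of j m] h(2) by blast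
      ultimately have "G j m = 0" unfolding G_def by simp
      then show False using h(1) by simp
    qed
    have GL: "G j m = 0" if "expo i m = t" for j m
    proof (cases "(j, m) \<in> P")
      case True
      have "(\<Sum>p\<in>P. F (fst p) (snd p) * b p j m) = (\<Sum>p\<in>P. if p = (j, m) then F j m else 0)"
        by (rule sum.cong) (use bL[OF True] in auto)
      also have "\<dots> = F j m" using finP True by simp
      finally show ?thesis unfolding G_def by simp
    next
      case False
      then have "\<not> (j < 2 \<and> deg m = n)" using that by (simp add: P_def)
      then have "F j m = 0" using Fs[of j m] by blast
      moreover have "b p j m = 0" if "p \<in> P" for p
        using bsupp[OF that, of j m] \<open>F j m = 0\<close> False that \<open>expo i m = t\<close>
        by (auto simp: P_def)
      ultimately show ?thesis unfolding G_def by simp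
    qed
    have G0: "G j m = 0" for j m
      by (rule unique0[where k=k, OF i t GD Gs GL])
    have "F j m = S j m" for j m
      using G0[of j m] unfolding G_def Sev[of j m] by simp
    then have "F = S" by blast
    then show "F \<in> cs.span (b ` P)" using Sin by simp
  qed
  have "cs.dim ?V = card (b ` P)"
    by (rule cs.dim_unique[OF _ spanning indep refl]) (use bV in auto)
  then show ?thesis unfolding cdim_def using card_image[OF injb] cardP by simp
qed

theorem proposition3p3:
  fixes k :: "nat \<Rightarrow> real" and n i :: nat
  assumes "i \<in> {1, 2, 3}"
  shows "(enat n < t_param (k i) \<longrightarrow> cdim (monogenic_x k i n) = 0) \<and>
         (t_param (k i) \<le> enat n \<longrightarrow>
            cdim (monogenic_x k i n) = 2 * (n - the_enat (t_param (k i)) + 1))"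
proof (cases "t_param (k i) = \<infinity>")
  case True
  have "cdim (monogenic_x k i n) = 0"
    by (rule zero_dim) (use True in \<open>auto simp: monogenic_x_def fun_eq_iff\<close>)
  then show ?thesis using True by simp
next
  case False
  then obtain t where tp: "t_param (k i) = enat t" using t_param_cases by blast
  then have t: "odd t" "k i = - real t / 2" using t_param_enat by blast+
  show ?thesis
  proof (cases "n < t")
    case True
    have "cdim (monogenic_x k i n) = 0"
    proof (rule zero_dim)
      fix F assume "F \<in> monogenic_x k i n"
      then have h1: "\<forall>j m. F j m \<noteq> 0 \<longrightarrow> j < 2 \<and> deg m = n"
        and h2: "\<forall>j m. F j m \<noteq> 0 \<longrightarrow> t_param (k i) \<le> enat (expo i m)"
        unfolding monogenic_x_def monogenic_def spin_hom_def by blast+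
      have "F j m \<noteq> 0 \<Longrightarrow> deg m = n \<and> t \<le> expo i m" for j m
      proof -
        assume a: "F j m \<noteq> 0"
        have "deg m = n" "t_param (k i) \<le> enat (expo i m)" using h1 h2 a by blast+
        then show ?thesis using tp by simp
      qed
      then have "F j m = 0" for j m using expo_le_deg[OF assms, of m] True by fastforce
      then show "F = (\<lambda>j m. 0)" by (simp add: fun_eq_iff)
    qed
    then show ?thesis using tp True by simp
  next
    case False
    then show ?thesis using main_case[where k=k, OF assms t] tp by simp
  qed
qed

end
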